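(* Let $\phi_1,\ldots,\phi_n\vdash\psi_0$ be a sequent of $NOM$. Suppose that for every orthomodular lattice $\mathcal Q$ and every function $[\![\cdot]\!]:\Phi\to\mathcal Q$ satisfying $[\![\phi\wedge\psi]\!]=[\![\phi]\!]\wedge[\![\psi]\!]$, $[\![\phi\rightarrow\psi]\!]=[\![\phi]\!]\rightarrow[\![\psi]\!]$, and $[\![\neg\phi]\!]=\neg[\![\phi]\!]$ for all formulas $\phi,\psi$, we have $[\![\phi_1]\!]\mathbin{\&}\cdots\mathbin{\&}[\![\phi_n]\!]\le[\![\psi_0]\!]$. Then $\phi_1,\ldots,\phi_n\vdash\psi_0$ is derivable in $NOM$.
   Context: $\Phi$ is the set of formulas of the propositional deductive system $NOM$: formulas are built from propositional letters using $\wedge$, $\rightarrow$, $\neg$. Sequents are $\phi_1,\ldots,\phi_n\vdash\psi$ ($n\ge0$) with antecedent a finite ordered sequence. With $\Gamma$ a finite possibly empty sequence of formulas and $\phi,\psi,\chi$ formulas, the rules of $NOM$ are: (assumption) $\Gamma,\phi\vdash\phi$; (cut) $\Gamma\vdash\phi$, $\Gamma,\phi\vdash\psi$ $\Rightarrow$ $\Gamma\vdash\psi$; (paste) $\Gamma\vdash\phi$, $\Gamma\vdash\psi$ $\Rightarrow$ $\Gamma,\phi\vdash\psi$; (compatible exchange) $\Gamma,\phi,\psi\vdash\phi$, $\Gamma,\phi,\psi\vdash\chi$, $\Gamma,\psi,\phi\vdash\psi$ $\Rightarrow$ $\Gamma,\psi,\phi\vdash\chi$; ($\wedge$-intro) $\Gamma\vdash\phi$,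 $\Gamma\vdash\psi$ $\Rightarrow$ $\Gamma\vdash\phi\wedge\psi$; ($\wedge$-elim) $\Gamma\vdash\phi\wedge\psi$ $\Rightarrow$ $\Gamma\vdash\phi$ and $\Rightarrow$ $\Gamma\vdash\psi$; ($\rightarrow$-intro) $\Gamma,\phi\vdash\psi$ $\Rightarrow$ $\Gamma\vdash\phi\rightarrow\psi$; ($\rightarrow$-elim) $\Gamma\vdash\phi\rightarrow\psi$ $\Rightarrow$ $\Gamma,\phi\vdash\psi$; (excluded middle) $\Gamma,\phi\vdash\psi$, $\Gamma,\neg\phi\vdash\psi$ $\Rightarrow$ $\Gamma\vdash\psi$; (explosion) $\Gamma\vdash\neg\phi$ $\Rightarrow$ $\Gamma,\phi\vdash\psi$. An orthomodular lattice is a bounded lattice with an order-reversing involution $\neg$ satisfying $a\wedge\neg a=\bot$, $a\vee\neg a=\top$, and $a\le b\Rightarrow a\vee(\neg a\wedge b)=b$. In it, $a\mathbin{\&}b=(a\vee\neg b)\wedge b$ and $a\rightarrow b=\neg a\vee(a\wedge b)$; $\&$ associates to the left and $a_1\mathbin{\&}\cdots\mathbin{\&}a_n=\top$ when $n=0$. *)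

theory Defs
  imports Main
begin

datatype 'v form = Var 'v | And "'v form" "'v form" | Imp "'v form" "'v form" | Neg "'v form"

text \<open>Derivability in NOM. A sequent is a pair (antecedent list, succedent);
  the antecedent "Gamma, phi" is Gamma @ [phi].\<close>
inductive NOM :: "'v form list \<Rightarrow> 'v form \<Rightarrow> bool" where
  assumption: "NOM (\<Gamma> @ [\<phi>]) \<phi>"
| cut: "NOM \<Gamma> \<phi> \<Longrightarrow> NOM (\<Gamma> @ [\<phi>]) \<psi> \<Longrightarrow> NOM \<Gamma> \<psi>"
| paste: "NOM \<Gamma> \<phi> \<Longrightarrow> NOM \<Gamma> \<psi> \<Longrightarrow> NOM (\<Gamma> @ [\<phi>]) \<psi>"
| compat_exchange: "NOM (\<Gamma> @ [\<phi>, \<psi>]) \<phi> \<Longrightarrow> NOM (\<Gamma> @ [\<phi>, \<psi>]) \<chi> \<Longrightarrow>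
     NOM (\<Gamma> @ [\<psi>, \<phi>]) \<psi> \<Longrightarrow> NOM (\<Gamma> @ [\<psi>, \<phi>]) \<chi>"
| and_intro: "NOM \<Gamma> \<phi> \<Longrightarrow> NOM \<Gamma> \<psi> \<Longrightarrow> NOM \<Gamma> (And \<phi> \<psi>)"
| and_elim1: "NOM \<Gamma> (And \<phi> \<psi>) \<Longrightarrow> NOM \<Gamma> \<phi>"
| and_elim2: "NOM \<Gamma> (And \<phi> \<psi>) \<Longrightarrow> NOM \<Gamma> \<psi>"
| imp_intro: "NOM (\<Gamma> @ [\<phi>]) \<psi> \<Longrightarrow> NOM \<Gamma> (Imp \<phi> \<psi>)"
| imp_elim: "NOM \<Gamma> (Imp \<phi> \<psi>) \<Longrightarrow> NOM (\<Gamma> @ [\<phi>]) \<psi>"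
| excluded_middle: "NOM (\<Gamma> @ [\<phi>]) \<psi> \<Longrightarrow> NOM (\<Gamma> @ [Neg \<phi>]) \<psi> \<Longrightarrow> NOM \<Gamma> \<psi>"
| explosion: "NOM \<Gamma> (Neg \<phi>) \<Longrightarrow> NOM (\<Gamma> @ [\<phi>]) \<psi>"

definition oml :: "'a set \<Rightarrow> ('a \<Rightarrow> 'a \<Rightarrow> bool) \<Rightarrow> ('a \<Rightarrow> 'a \<Rightarrow> 'a) \<Rightarrow> ('a \<Rightarrow> 'a \<Rightarrow> 'a)
    \<Rightarrow> ('a \<Rightarrow> 'a) \<Rightarrow> 'a \<Rightarrow> 'a \<Rightarrow> bool" where
  "oml Q le mt jn ng bt tp \<longleftrightarrow>
     (\<forall>a\<in>Q. le a a) \<and>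
     (\<forall>a\<in>Q. \<forall>b\<in>Q. le a b \<and> le b a \<longrightarrow> a = b) \<and>
     (\<forall>a\<in>Q. \<forall>b\<in>Q. \<forall>c\<in>Q. le a b \<and> le b c \<longrightarrow> le a c) \<and>
     (\<forall>a\<in>Q. \<forall>b\<in>Q. mt a b \<in> Q \<and> le (mt a b) a \<and> le (mt a b) b \<and>
        (\<forall>c\<in>Q. le c a \<and> le c b \<longrightarrow> le c (mt a b))) \<and>
     (\<forall>a\<in>Q. \<forall>b\<in>Q. jn a b \<in> Q \<and> le a (jn a b) \<and> le b (jn a b) \<and>
        (\<forall>c\<in>Q. le a c \<and> le b c \<longrightarrow> le (jn a b) c)) \<and>
     bt \<in> Q \<and> tp \<in> Q \<and> (\<forall>a\<in>Q. le bt a \<and> le a tp) \<and>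
     (\<forall>a\<in>Q. ng a \<in> Q \<and> ng (ng a) = a) \<and>
     (\<forall>a\<in>Q. \<forall>b\<in>Q. le a b \<longrightarrow> le (ng b) (ng a)) \<and>
     (\<forall>a\<in>Q. mt a (ng a) = bt \<and> jn a (ng a) = tp) \<and>
     (\<forall>a\<in>Q. \<forall>b\<in>Q. le a b \<longrightarrow> jn a (mt (ng a) b) = b)"

definition sasaki_and :: "('a \<Rightarrow> 'a \<Rightarrow> 'a) \<Rightarrow> ('a \<Rightarrow> 'a \<Rightarrow> 'a) \<Rightarrow> ('a \<Rightarrow> 'a) \<Rightarrow> 'a \<Rightarrow> 'a \<Rightarrow> 'a" where
  "sasaki_and mt jn ng a b = mt (jn a (ng b)) b"

definition sasaki_imp :: "('a \<Rightarrow> 'a \<Rightarrow> 'a) \<Rightarrow> ('a \<Rightarrow> 'a \<Rightarrow> 'a) \<Rightarrow> ('a \<Rightarrow> 'a) \<Rightarrow> 'a \<Rightarrow> 'a \<Rightarrow> 'a" where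
  "sasaki_imp mt jn ng a b = jn (ng a) (mt a b)"

fun amps :: "('a \<Rightarrow> 'a \<Rightarrow> 'a) \<Rightarrow> ('a \<Rightarrow> 'a \<Rightarrow> 'a) \<Rightarrow> ('a \<Rightarrow> 'a) \<Rightarrow> 'a \<Rightarrow> 'a list \<Rightarrow> 'a" where
  "amps mt jn ng tp [] = tp"
| "amps mt jn ng tp (a # as) = foldl (sasaki_and mt jn ng) a as"

definition valuation :: "'a set \<Rightarrow> ('a \<Rightarrow> 'a \<Rightarrow> 'a) \<Rightarrow> ('a \<Rightarrow> 'a \<Rightarrow> 'a) \<Rightarrow> ('a \<Rightarrow> 'a)
    \<Rightarrow> ('v form \<Rightarrow> 'a) \<Rightarrow> bool" where
  "valuation Q mt jn ng v \<longleftrightarrow>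
     (\<forall>\<phi>. v \<phi> \<in> Q) \<and>
     (\<forall>\<phi> \<psi>. v (And \<phi> \<psi>) = mt (v \<phi>) (v \<psi>)) \<and>
     (\<forall>\<phi> \<psi>. v (Imp \<phi> \<psi>) = sasaki_imp mt jn ng (v \<phi>) (v \<psi>)) \<and>
     (\<forall>\<phi>. v (Neg \<phi>) = ng (v \<phi>))"

end

theory Submission
  imports Defs
begin

lemma weakenL: "NOM \<Gamma> \<psi> \<Longrightarrow> NOM (\<Delta> @ \<Gamma>) \<psi>"
proof (induction rule: NOM.induct)
  case (assumption \<Gamma> \<phi>) show ?case using NOM.assumption[of "\<Delta>@\<Gamma>" \<phi>] by simp
next
  case (cut \<Gamma> \<phi> \<psi>) then show ?case using NOM.cut[of "\<Delta>@\<Gamma>" \<phi> \<psi>] by simp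
next
  case (paste \<Gamma> \<phi> \<psi>) then show ?case using NOM.paste[of "\<Delta>@\<Gamma>" \<phi> \<psi>] by simp
next
  case (compat_exchange \<Gamma> \<phi> \<psi> \<chi>) then show ?case
    using NOM.compat_exchange[of "\<Delta>@\<Gamma>" \<phi> \<psi> \<chi>] by simp
next
  case (and_intro \<Gamma> \<phi> \<psi>) then show ?case using NOM.and_intro[of "\<Delta>@\<Gamma>" \<phi> \<psi>] by simp
next
  case (and_elim1 \<Gamma> \<phi> \<psi>) then show ?case using NOM.and_elim1[of "\<Delta>@\<Gamma>" \<phi> \<psi>] by simp
next
  case (and_elim2 \<Gamma> \<phi> \<psi>) then show ?case using NOM.and_elim2[of "\<Delta>@\<Gamma>" \<phi> \<psi>] by simp
next
  case (imp_intro \<Gamma> \<phi> \<psi>) then show ?case using NOM.imp_intro[of "\<Delta>@\<Gamma>" \<phi> \<psi>] by simp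
next
  case (imp_elim \<Gamma> \<phi> \<psi>) then show ?case using NOM.imp_elim[of "\<Delta>@\<Gamma>" \<phi> \<psi>] by simp
next
  case (excluded_middle \<Gamma> \<phi> \<psi>) then show ?case
    using NOM.excluded_middle[of "\<Delta>@\<Gamma>" \<phi> \<psi>] by simp
next
  case (explosion \<Gamma> \<phi> \<psi>) then show ?case using NOM.explosion[of "\<Delta>@\<Gamma>" \<phi> \<psi>] by simp
qed

lemma ax1: "NOM [a] a"
  using NOM.assumption[of "[]" a] by simp

lemma ax2: "NOM [a, b] b"
  using NOM.assumption[of "[a]" b] by simp

lemma wk0: "NOM [] \<psi> \<Longrightarrow> NOM \<Gamma> \<psi>"
  using weakenL[of "[]" \<psi> \<Gamma>] by simp

lemma mp_ctx: "NOM \<Gamma> b \<Longrightarrow> NOM [b] c \<Longrightarrow> NOM \<Gamma> c"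
proof -
  assume 1: "NOM \<Gamma> b" and 2: "NOM [b] c"
  have "NOM [] (Imp b c)" using NOM.imp_intro[of "[]" b c] 2 by simp
  then have "NOM \<Gamma> (Imp b c)" by (rule wk0)
  then have "NOM (\<Gamma> @ [b]) c" by (rule NOM.imp_elim)
  with 1 show ?thesis by (rule NOM.cut)
qed

lemma trans1: "NOM [a] b \<Longrightarrow> NOM [b] c \<Longrightarrow> NOM [a] c"
  by (rule mp_ctx)

lemma contra: "NOM \<Gamma> \<phi> \<Longrightarrow> NOM \<Gamma> (Neg \<phi>) \<Longrightarrow> NOM \<Gamma> \<chi>"
  by (meson NOM.cut NOM.explosion)

lemma dne: "NOM [Neg (Neg a)] a"
proof -
  have "NOM ([Neg (Neg a)] @ [a]) a" by (rule NOM.assumption)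
  moreover have "NOM ([Neg (Neg a)] @ [Neg a]) a" by (rule NOM.explosion) (rule ax1)
  ultimately show ?thesis by (rule NOM.excluded_middle)
qed

lemma dni: "NOM [a] (Neg (Neg a))"
proof -
  have "NOM ([] @ [Neg (Neg a)]) (Imp a (Neg (Neg a)))"
    apply (rule NOM.imp_intro)
    using NOM.paste[OF dne ax1[of "Neg (Neg a)"]] by simp
  moreover have "NOM ([] @ [Neg a]) (Imp a (Neg (Neg a)))"
    apply (rule NOM.imp_intro)
    using NOM.explosion[OF ax1[of "Neg a"]] by simp
  ultimately have "NOM [] (Imp a (Neg (Neg a)))"
    by (rule NOM.excluded_middle[rotated])
  then show ?thesis using NOM.imp_elim[of "[]"] by simp
qed

lemma dni_ctx: "NOM \<Gamma> a \<Longrightarrow> NOM \<Gamma> (Neg (Neg a))"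
  using mp_ctx dni by blast

lemma contradictory_pair: "NOM [y, Neg y] \<chi>"
  using NOM.explosion[OF dni[of y]] by simp

lemma ORTH: assumes "NOM [x] (Neg y)" shows "NOM [y, x] \<chi>"
proof -
  have yx: "NOM [y, x] (Neg y)" using weakenL[OF assms, of "[y]"] by simp
  have c: "NOM [y, Neg y] (Imp x z)" for z by (rule contradictory_pair)
  have c2: "NOM [y, Neg y, x] z" for z
    using NOM.imp_elim[OF c[of z]] by simp
  have p: "NOM [y, x, Neg y] x"
    using NOM.paste[OF yx, of x] NOM.assumption[of "[y]" x] by simp
  have i: "NOM ([y, x] @ [Neg y]) \<chi>"
    using NOM.compat_exchange[of "[y]" "Neg y" x \<chi>] c2 p by simp
  have ii: "NOM ([y, x] @ [Neg (Neg y)]) \<chi>"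
    by (rule NOM.explosion) (rule dni_ctx[OF yx])
  show ?thesis using NOM.excluded_middle[OF i ii] .
qed

lemma contrapos: assumes "NOM [a] b" shows "NOM [Neg b] (Neg a)"
proof -
  have "NOM [a] (Neg (Neg b))" using dni_ctx[OF assms] .
  then have "NOM ([Neg b] @ [a]) (Neg a)" using ORTH by simp
  moreover have "NOM ([Neg b] @ [Neg a]) (Neg a)" by (rule NOM.assumption)
  ultimately show ?thesis by (rule NOM.excluded_middle)
qed

lemma PERS: assumes "NOM [Neg q] p" shows "NOM [q, p] q"
proof -
  have i: "NOM ([q, p] @ [q]) q" by (rule NOM.assumption)
  have t: "NOM [] (Imp (Neg q) p)" using NOM.imp_intro[of "[]"] assms by simp
  have t2: "NOM [q, p, Neg q] p"
    using NOM.imp_elim[OF wk0[OF t, of "[q,p]"]] by simp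
  have c: "NOM [q, Neg q] (Imp p z)" for z by (rule contradictory_pair)
  have c2: "NOM [q, Neg q, p] z" for z
    using NOM.imp_elim[OF c[of z]] by simp
  have ii: "NOM ([q, p] @ [Neg q]) q"
    using NOM.compat_exchange[of "[q]" "Neg q" p q] c2 t2 by simp
  show ?thesis using NOM.excluded_middle[OF i ii] .
qed

lemma andE1: "NOM [And a b] a" using NOM.and_elim1[OF ax1] .
lemma andE2: "NOM [And a b] b" using NOM.and_elim2[OF ax1] .

definition Or :: "'v form \<Rightarrow> 'v form \<Rightarrow> 'v form" where
  "Or a b = Neg (And (Neg a) (Neg b))"

lemma orI1: "NOM [a] (Or a b)"
  unfolding Or_def using trans1[OF dni contrapos[OF andE1]] .

lemma orI2: "NOM [b] (Or a b)"
  unfolding Or_def using trans1[OF dni contrapos[OF andE2]] .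

lemma orE: assumes "NOM [a] c" "NOM [b] c" shows "NOM [Or a b] c"
proof -
  have "NOM [Neg c] (And (Neg a) (Neg b))"
    using NOM.and_intro[OF contrapos[OF assms(1)] contrapos[OF assms(2)]] .
  then show ?thesis unfolding Or_def using trans1[OF contrapos dne] by blast
qed

lemma thm_neg: assumes "\<And>\<chi>. NOM [X] \<chi>" shows "NOM [] (Neg X)"
  using NOM.excluded_middle[of "[]" X "Neg X"] assms NOM.assumption[of "[]" "Neg X"] by simp


lemma imp_or: "NOM [Imp a b] (Or (Neg a) (And a b))"
proof -
  have 1: "NOM [Imp a b, a] b" using NOM.imp_elim[OF ax1[of "Imp a b"]] by simp
  have 2: "NOM ([Imp a b] @ [a]) (Or (Neg a) (And a b))"
    using mp_ctx[OF NOM.and_intro[OF ax2 1] orI2] by simp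
  have 3: "NOM ([Imp a b] @ [Neg a]) (Or (Neg a) (And a b))"
    using mp_ctx[OF ax2 orI1] by simp
  show ?thesis using NOM.excluded_middle[OF 2 3] .
qed

lemma or_imp: "NOM [Or (Neg a) (And a b)] (Imp a b)"
proof (rule orE)
  show "NOM [Neg a] (Imp a b)"
    using NOM.imp_intro[of "[Neg a]"] NOM.explosion[OF ax1[of "Neg a"]] by simp
  show "NOM [And a b] (Imp a b)"
    using NOM.imp_intro[of "[And a b]"] NOM.paste[OF andE1 andE2] by simp blast
qed

lemma OM: assumes "NOM [a] b" shows "NOM [b] (Or a (And (Neg a) b))"
proof -
  have 1: "NOM ([b] @ [a]) (Or a (And (Neg a) b))"
    using mp_ctx[OF ax2 orI1] by simp
  have "NOM [b, Neg a] b" by (rule PERS) (rule contrapos[OF assms])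
  then have 2: "NOM ([b] @ [Neg a]) (Or a (And (Neg a) b))"
    using mp_ctx[OF NOM.and_intro[OF ax2] orI2] by simp
  show ?thesis using NOM.excluded_middle[OF 1 2] .
qed

definition sandF :: "'v form \<Rightarrow> 'v form \<Rightarrow> 'v form" where
  "sandF a b = And (Or a (Neg b)) b"

lemma SAND: assumes "NOM [sandF F h] c" shows "NOM [F, h] c"
proof -
  let ?d = "Or F (Neg h)"
  have Fd: "NOM [F] ?d" by (rule orI1)
  have "NOM [Neg ?d] h" using trans1[OF contrapos[OF orI2] dne] .
  then have "NOM [?d, h] ?d" by (rule PERS)
  then have "NOM [] (Imp ?d (Imp h ?d))"
    using NOM.imp_intro[of "[]"] NOM.imp_intro[of "[?d]"] by simp blast
  then have "NOM [F, ?d] (Imp h ?d)" using NOM.imp_elim[OF wk0[where \<Gamma>="[F]"]] by simp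
  then have "NOM [F] (Imp h ?d)" using NOM.cut[OF Fd] by simp
  then have "NOM [F, h] ?d" using NOM.imp_elim[of "[F]"] by simp
  then have "NOM [F, h] (sandF F h)" unfolding sandF_def using NOM.and_intro ax2 by blast
  then show ?thesis using mp_ctx assms by blast
qed

lemma KEY: "NOM [foldl sandF g gs] c \<Longrightarrow> NOM (g # gs) c"
proof (induction gs arbitrary: c rule: rev_induct)
  case Nil then show ?case by simp
next
  case (snoc h gs)
  have "NOM [foldl sandF g gs, h] c" using SAND snoc.prems by simp
  then have "NOM [foldl sandF g gs] (Imp h c)" using NOM.imp_intro[of "[_]"] by simp
  then have "NOM (g # gs) (Imp h c)" by (rule snoc.IH)
  then show ?case using NOM.imp_elim[of "g # gs"] by simp
qed

definition T :: "'v form" where "T = Imp (Var undefined) (Var undefined)"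

lemma thmT: "NOM [] T"
  unfolding T_def using NOM.imp_intro[of "[]"] ax1 by simp blast

definition EQ :: "'v form \<Rightarrow> 'v form \<Rightarrow> bool" where
  "EQ a b \<longleftrightarrow> NOM [a] b \<and> NOM [b] a"

definition cls :: "'v form \<Rightarrow> 'v form set" where "cls a = {b. EQ a b}"
definition rep :: "'v form set \<Rightarrow> 'v form" where "rep A = (SOME a. a \<in> A)"

lemma rep_cls: "EQ a (rep (cls a))"
proof -
  have "a \<in> cls a" unfolding cls_def EQ_def using ax1 by simp
  then have "rep (cls a) \<in> cls a" unfolding rep_def by (rule someI)
  then show ?thesis unfolding cls_def by simp
qed

lemma cls_eq: "cls a = cls b \<longleftrightarrow> EQ a b"
proof
  assume "cls a = cls b"
  then have "b \<in> cls a" unfolding cls_def EQ_def using ax1 by auto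
  then show "EQ a b" unfolding cls_def by simp
next
  assume "EQ a b"
  then show "cls a = cls b" unfolding cls_def EQ_def using trans1 by blast
qed

definition LE :: "'v form set \<Rightarrow> 'v form set \<Rightarrow> bool" where
  "LE A B \<longleftrightarrow> NOM [rep A] (rep B)"
definition MT :: "'v form set \<Rightarrow> 'v form set \<Rightarrow> 'v form set" where
  "MT A B = cls (And (rep A) (rep B))"
definition JN :: "'v form set \<Rightarrow> 'v form set \<Rightarrow> 'v form set" where
  "JN A B = cls (Or (rep A) (rep B))"
definition NG :: "'v form set \<Rightarrow> 'v form set" where
  "NG A = cls (Neg (rep A))"

lemma LE_cls: "LE (cls a) (cls b) \<longleftrightarrow> NOM [a] b"
  using rep_cls[of a] rep_cls[of b] unfolding LE_def EQ_def using trans1 by blast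

lemma and_mono: "NOM [a] a' \<Longrightarrow> NOM [b] b' \<Longrightarrow> NOM [And a b] (And a' b')"
  by (meson NOM.and_intro andE1 andE2 trans1)

lemma or_mono: "NOM [a] a' \<Longrightarrow> NOM [b] b' \<Longrightarrow> NOM [Or a b] (Or a' b')"
  by (meson orE orI1 orI2 trans1)

lemma MT_cls: "MT (cls a) (cls b) = cls (And a b)"
  using rep_cls[of a] rep_cls[of b] unfolding MT_def cls_eq EQ_def by (meson and_mono)

lemma JN_cls: "JN (cls a) (cls b) = cls (Or a b)"
  using rep_cls[of a] rep_cls[of b] unfolding JN_def cls_eq EQ_def by (meson or_mono)

lemma NG_cls: "NG (cls a) = cls (Neg a)"
  using rep_cls[of a] unfolding NG_def cls_eq EQ_def by (meson contrapos)

lemma sand_cls: "sasaki_and MT JN NG (cls a) (cls b) = cls (sandF a b)"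
  unfolding sasaki_and_def sandF_def by (simp add: NG_cls JN_cls MT_cls)

lemma fold_cls: "foldl (sasaki_and MT JN NG) (cls F) (map cls gs) = cls (foldl sandF F gs)"
  by (induction gs arbitrary: F) (simp_all add: sand_cls)


lemma botT: "NOM [Neg T] a"
  using NOM.explosion[OF dni_ctx[OF thmT], of a] by simp

lemma topT: "NOM [a] T" by (rule wk0[OF thmT])

lemma and_contra: "NOM [And a (Neg a)] c"
  by (rule contra[OF andE1 andE2])

lemma or_excl: "NOM [T] (Or a (Neg a))"
proof -
  have "NOM [] (Or a (Neg a))" unfolding Or_def
    by (rule thm_neg) (rule contra[OF andE1 andE2])
  then show ?thesis by (rule wk0)
qed

lemma oml_L: "oml (range cls) LE MT JN NG (cls (Neg T)) (cls T)"
proof -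
  let ?Q = "range cls"
  have c1: "\<forall>a\<in>?Q. LE a a" by (auto simp add: LE_cls ax1)
  have c2: "\<forall>a\<in>?Q. \<forall>b\<in>?Q. LE a b \<and> LE b a \<longrightarrow> a = b"
    by (auto simp add: LE_cls cls_eq EQ_def)
  have c3: "\<forall>a\<in>?Q. \<forall>b\<in>?Q. \<forall>c\<in>?Q. LE a b \<and> LE b c \<longrightarrow> LE a c"
    by (auto simp add: LE_cls elim: trans1)
  have c4: "\<forall>a\<in>?Q. \<forall>b\<in>?Q. MT a b \<in> ?Q \<and> LE (MT a b) a \<and> LE (MT a b) b \<and>
        (\<forall>c\<in>?Q. LE c a \<and> LE c b \<longrightarrow> LE c (MT a b))"
    by (auto simp add: MT_cls LE_cls andE1 andE2 intro: NOM.and_intro)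
  have c5: "\<forall>a\<in>?Q. \<forall>b\<in>?Q. JN a b \<in> ?Q \<and> LE a (JN a b) \<and> LE b (JN a b) \<and>
        (\<forall>c\<in>?Q. LE a c \<and> LE b c \<longrightarrow> LE (JN a b) c)"
    by (auto simp add: JN_cls LE_cls orI1 orI2 intro: orE)
  have c6: "cls (Neg T) \<in> ?Q \<and> cls T \<in> ?Q \<and> (\<forall>a\<in>?Q. LE (cls (Neg T)) a \<and> LE a (cls T))"
    by (auto simp add: LE_cls botT topT)
  have c7: "\<forall>a\<in>?Q. NG a \<in> ?Q \<and> NG (NG a) = a"
    by (auto simp add: NG_cls cls_eq EQ_def dne dni)
  have c8: "\<forall>a\<in>?Q. \<forall>b\<in>?Q. LE a b \<longrightarrow> LE (NG b) (NG a)"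
    by (auto simp add: NG_cls LE_cls contrapos)
  have c9: "\<forall>a\<in>?Q. MT a (NG a) = cls (Neg T) \<and> JN a (NG a) = cls T"
    by (auto simp add: NG_cls MT_cls JN_cls cls_eq EQ_def and_contra botT or_excl topT)
  have c10: "\<forall>a\<in>?Q. \<forall>b\<in>?Q. LE a b \<longrightarrow> JN a (MT (NG a) b) = b"
    by (auto simp add: NG_cls JN_cls MT_cls LE_cls cls_eq EQ_def OM andE2 intro: orE)
  show ?thesis unfolding oml_def using c1 c2 c3 c4 c5 c6 c7 c8 c9 c10 by blast
qed

lemma val_L: "valuation (range cls) MT JN NG cls"
  unfolding valuation_def sasaki_imp_def
  by (auto simp add: MT_cls JN_cls NG_cls cls_eq EQ_def imp_or or_imp)

theorem corollary3p9:
  fixes \<Gamma> :: "'v form list" and \<psi>\<^sub>0 :: "'v form"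
  assumes "\<forall>(Q :: 'v form set set) le mt jn ng bt tp (v :: 'v form \<Rightarrow> 'v form set).
             oml Q le mt jn ng bt tp \<and> valuation Q mt jn ng v \<longrightarrow>
             le (amps mt jn ng tp (map v \<Gamma>)) (v \<psi>\<^sub>0)"
  shows "NOM \<Gamma> \<psi>\<^sub>0"
proof -
  have H: "LE (amps MT JN NG (cls T) (map cls \<Gamma>)) (cls \<psi>\<^sub>0)"
    using assms oml_L val_L by blast
  show ?thesis
  proof (cases \<Gamma>)
    case Nil
    then have "NOM [T] \<psi>\<^sub>0" using H by (simp add: LE_cls)
    then show ?thesis using Nil mp_ctx[OF thmT] by simp
  next
    case (Cons g gs)
    then have "NOM [foldl sandF g gs] \<psi>\<^sub>0" using H by (simp add: fold_cls LE_cls)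
    then show ?thesis using Cons KEY by simp
  qed
qed

end
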